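(* Let $n\ge 1$ users have valuations drawn i.i.d. from a distribution on $[0,1]$ with pdf $\rho$, and let $c_\rho=\int_0^1\rho^2(t)\,dt$. For a parameter $h\ge 0$ consider the mechanism $\tilde M=(\mathbf a,\tilde{\mathbf p},\tilde r)$ defined for bid vectors $\mathbf b=(b_1,\dots,b_n)\in[0,1]^n$ by \[ a_i(\mathbf b)=\frac{e^{b_i}}{\sum_{j=1}^n e^{b_j}}, \] \[ \tilde p_i(\mathbf b)=b_i-\frac{\sum_{j=1}^n e^{b_j}}{e^{b_i}}\left(\ln\frac{\sum_{j=1}^n e^{b_j}}{1+\sum_{j\ne i}e^{b_j}}+\frac12 h b_i^2\left(\frac{\sum_{j\ne i}b_j^2}{c_\rho(n-1)}-1\right)\right), \] \[ \tilde r(\mathbf b)=\frac12 h\left(\sum_{i=1}^n b_i^2-\frac{\sum_{1\le i<j\le n}b_i^2b_j^2}{c_\rho(n-1)}\right) \] (this is the soft second-price mechanism with $m=1$, perturbed with parameter $h$). Then there exists $h_*=h_*(n,c_\rho)>0$ such that for every $h\in[0,h_*]$ the mechanism $\tilde M$ is user individually rational and budget feasible, and, as $n\to+\infty$, $h_*(n,c_\rho)=\Omega(c_\rho/n)$.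
   Context: A transaction fee mechanism (TFM) for $n$ users is a triple $(\mathbf a,\mathbf p,r)$: $\mathbf a:[0,1]^n\to[0,1]^n$ gives each user's confirmation probability, $\mathbf p:[0,1]^n\to\mathbb R^n$ gives each user's payment if confirmed, and $r:[0,1]^n\to\mathbb R$ gives the miner's revenue. User individual rationality (UIR): for all $i$ and all bid vectors $\mathbf b$ with $b_i$ equal to the user's bid, $a_i(\mathbf b)>0\implies p_i(\mathbf b)\le b_i$. Budget feasibility (BF): for all $\mathbf b$, $\sum_{i=1}^n a_i(\mathbf b)p_i(\mathbf b)\ge r(\mathbf b)$. *)

theory Defs
  imports "HOL-Analysis.Analysis" "HOL-Library.Landau_Symbols"
begin

text \<open>Bid vectors for n users are functions nat => real; only indices i < n matter.
  A bid vector is admissible if every bid lies in [0,1].\<close>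
definition bids :: "nat \<Rightarrow> (nat \<Rightarrow> real) set" where
  "bids n = {b. \<forall>i<n. b i \<in> {0..1}}"

definition UIR :: "nat \<Rightarrow> (nat \<Rightarrow> (nat \<Rightarrow> real) \<Rightarrow> real) \<Rightarrow> (nat \<Rightarrow> (nat \<Rightarrow> real) \<Rightarrow> real) \<Rightarrow> bool" where
  "UIR n a p \<longleftrightarrow> (\<forall>b\<in>bids n. \<forall>i<n. a i b > 0 \<longrightarrow> p i b \<le> b i)"

definition BF :: "nat \<Rightarrow> (nat \<Rightarrow> (nat \<Rightarrow> real) \<Rightarrow> real) \<Rightarrow> (nat \<Rightarrow> (nat \<Rightarrow> real) \<Rightarrow> real)
                   \<Rightarrow> ((nat \<Rightarrow> real) \<Rightarrow> real) \<Rightarrow> bool" where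
  "BF n a p r \<longleftrightarrow> (\<forall>b\<in>bids n. (\<Sum>i<n. a i b * p i b) \<ge> r b)"

definition pdf01 :: "(real \<Rightarrow> real) \<Rightarrow> bool" where
  "pdf01 \<rho> \<longleftrightarrow> (\<forall>t\<in>{0..1}. \<rho> t \<ge> 0) \<and> \<rho> integrable_on {0..1} \<and> integral {0..1} \<rho> = 1"

definition c_rho :: "(real \<Rightarrow> real) \<Rightarrow> real" where
  "c_rho \<rho> = integral {0..1} (\<lambda>t. (\<rho> t)\<^sup>2)"

definition alloc :: "nat \<Rightarrow> nat \<Rightarrow> (nat \<Rightarrow> real) \<Rightarrow> real" where
  "alloc n i b = exp (b i) / (\<Sum>j<n. exp (b j))"

definition pay :: "nat \<Rightarrow> real \<Rightarrow> real \<Rightarrow> nat \<Rightarrow> (nat \<Rightarrow> real) \<Rightarrow> real" where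
  "pay n c h i b = b i - (\<Sum>j<n. exp (b j)) / exp (b i) *
     ( ln ((\<Sum>j<n. exp (b j)) / (1 + (\<Sum>j\<in>{..<n}-{i}. exp (b j))))
       + 1/2 * h * (b i)\<^sup>2 * ((\<Sum>j\<in>{..<n}-{i}. (b j)\<^sup>2) / (c * real (n - 1)) - 1))"

definition revenue :: "nat \<Rightarrow> real \<Rightarrow> real \<Rightarrow> (nat \<Rightarrow> real) \<Rightarrow> real" where
  "revenue n c h b = 1/2 * h * ((\<Sum>i<n. (b i)\<^sup>2)
     - (\<Sum>(i,j)\<in>{(i,j). i < j \<and> j < n}. (b i)\<^sup>2 * (b j)\<^sup>2) / (c * real (n - 1)))"

end

theory Submission
  imports Defs
begin

lemma dtest:
  fixes T k x :: real
  assumes pos: "exp x + T > 0"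
  shows "DERIV (\<lambda>x. x*exp x/(exp x+T) - ln(exp x + T) + ln(1+T) - k/2*x^2) x :> x*(exp x*T/(exp x+T)^2 - k)"
proof -
  have d1: "DERIV (\<lambda>x. x * exp x) x :> 1 * exp x + exp x * x"
    by (rule DERIV_mult[OF DERIV_ident DERIV_exp])
  have d2: "DERIV (\<lambda>x. exp x + T) x :> exp x + 0"
    by (rule DERIV_add[OF DERIV_exp DERIV_const])
  have d3: "DERIV (\<lambda>x. x * exp x / (exp x + T)) x :>
      ((1 * exp x + exp x * x) * (exp x + T) - x * exp x * (exp x + 0)) / ((exp x + T) * (exp x + T))"
    using DERIV_divide[OF d1 d2] pos by simp
  have d4: "DERIV (\<lambda>x. ln (exp x + T)) x :> 1/(exp x + T) * (exp x + 0)"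
    by (rule DERIV_chain2[OF DERIV_ln_divide[OF pos] d2])
  have d5: "DERIV (\<lambda>x. k/2 * x^2) x :> k/2 * (real 2 * x^(2 - Suc 0))"
    by (rule DERIV_cmult[OF DERIV_pow])
  have d: "DERIV (\<lambda>x. x*exp x/(exp x+T) - ln(exp x + T) + ln(1+T) - k/2*x^2) x :>
     ((1 * exp x + exp x * x) * (exp x + T) - x * exp x * (exp x + 0)) / ((exp x + T) * (exp x + T))
     - 1/(exp x + T) * (exp x + 0) + 0 - k/2 * (real 2 * x^(2 - Suc 0))"
    by (rule DERIV_diff[OF DERIV_add[OF DERIV_diff[OF d3 d4] DERIV_const] d5])
  have ne: "exp x + T \<noteq> 0" using pos by simp
  have eq: "((1 * exp x + exp x * x) * (exp x + T) - x * exp x * (exp x + 0)) / ((exp x + T) * (exp x + T))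
     - 1/(exp x + T) * (exp x + 0) + 0 - k/2 * (real 2 * x^(2 - Suc 0)) = x*(exp x*T/(exp x+T)^2 - k)"
  proof -
    have a: "1/(exp x + T) * (exp x + 0) = (exp x * (exp x + T)) / ((exp x + T) * (exp x + T))"
      using ne by simp
    have b: "((1 * exp x + exp x * x) * (exp x + T) - x * exp x * exp x) - exp x * (exp x + T)
        = x * (exp x * T)" by (simp add: algebra_simps)
    have c: "k/2 * (real 2 * x^(2 - Suc 0)) = x * k" by simp
    show ?thesis unfolding a c
      by (simp only: diff_divide_distrib[symmetric] b power2_eq_square right_diff_distrib add_0_right times_divide_eq_right)
  qed
  show ?thesis using d unfolding eq .
qed

lemma slack_lemma:
  fixes T b k :: real
  assumes T: "T \<ge> 0" and b: "0 \<le> b" "b \<le> 1" and k: "0 \<le> k" "k \<le> T/(exp 1 + T)^2"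
  shows "k/2*b^2 \<le> b*exp b/(exp b + T) - ln ((exp b + T)/(1+T))"
proof -
  define g where "g x = x*exp x/(exp x+T) - ln(exp x + T) + ln(1+T) - k/2*x^2" for x
  have "g 0 \<le> g b"
  proof (rule DERIV_nonneg_imp_nondecreasing[OF b(1)])
    fix x assume x: "0 \<le> x" "x \<le> b"
    have pos: "exp x + T > 0" using T by (simp add: add_pos_nonneg)
    have "DERIV g x :> x*(exp x*T/(exp x+T)^2 - k)"
      unfolding g_def by (rule dtest[OF pos])
    moreover have "exp x*T/(exp x+T)^2 \<ge> T/(exp 1+T)^2"
    proof -
      have "exp x \<ge> 1" using x by simp
      moreover have "exp x \<le> exp 1" using x b by simp
      ultimately have "T \<le> exp x * T" "(exp x+T)^2 \<le> (exp 1+T)^2"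
        using T pos mult_right_mono[of 1 "exp x" T] by (auto intro: power_mono)
      then show ?thesis using pos T
        by (meson frac_le mult_nonneg_nonneg exp_ge_zero zero_less_power)
    qed
    ultimately show "\<exists>y. DERIV g x :> y \<and> y \<ge> 0" using x k by (intro exI[of _ "x*(exp x*T/(exp x+T)^2 - k)"]) auto
  qed
  moreover have "g 0 = 0" by (simp add: g_def add.commute)
  moreover have "ln ((exp b + T)/(1+T)) = ln(exp b + T) - ln(1+T)"
  proof -
    have "exp b + T > 0" "1 + T > 0" using T by (auto simp: add_pos_nonneg)
    then show ?thesis by (rule ln_divide_pos)
  qed
  ultimately show ?thesis by (simp add: g_def)
qed

lemma uir_lemma:
  fixes T b :: real
  assumes T: "T \<ge> 0" and b: "0 \<le> b" "b \<le> 1"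
  shows "b/(exp 1 + T) \<le> ln ((exp b + T)/(1+T))"
proof -
  have p1: "exp b + T > 0" "1 + T > 0" using T by (auto simp: add_pos_nonneg)
  have "ln (exp b + T) - ln (1+T) \<ge> ((exp b + T) - (1+T))/(exp b + T)"
    using ln_diff_le[of "1+T" "exp b + T"] p1 by (simp add: divide_simps) argo
  moreover have "((exp b + T) - (1+T))/(exp b + T) \<ge> b/(exp b + T)"
    using p1 exp_ge_add_one_self[of b] by (intro divide_right_mono) (auto simp: algebra_simps)
  moreover have "b/(exp b + T) \<ge> b/(exp 1 + T)"
    using p1 b T by (intro divide_left_mono) (auto intro!: mult_pos_pos add_pos_nonneg)
  ultimately show ?thesis using p1 by (simp add: ln_divide_pos)
qed

definition hs :: "nat \<Rightarrow> real \<Rightarrow> real" where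
  "hs n c = (if c > 0 then min 1 c else 1) / (2 * (exp 1)^2 * real n)"

lemma core_i:
  fixes b :: "nat \<Rightarrow> real"
  assumes n: "n \<ge> 1" and c: "c \<ge> 0" and h: "0 \<le> h" "h \<le> hs n c"
    and b: "b \<in> bids n" and i: "i < n"
  shows "pay n c h i b \<le> b i" "alloc n i b * pay n c h i b \<ge> h/2 * (b i)^2"
proof -
  define S where "S = (\<Sum>j<n. exp (b j))"
  define T where "T = (\<Sum>j\<in>{..<n}-{i}. exp (b j))"
  define Q where "Q = (\<Sum>j\<in>{..<n}-{i}. (b j)^2)"
  define D where "D = c * real (n - 1)"
  define L where "L = ln (S/(1+T))"
  define x where "x = b i"
  have bj: "\<And>j. j < n \<Longrightarrow> 0 \<le> b j \<and> b j \<le> 1" using b by (auto simp: bids_def)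
  have x: "0 \<le> x" "x \<le> 1" using bj[OF i] by (auto simp: x_def)
  have SS: "S = exp x + T" unfolding S_def T_def x_def
    using sum.remove[of "{..<n}" i "\<lambda>j. exp (b j)"] i by simp
  have card: "card ({..<n}-{i}) = n - 1" using i by simp
  have T1: "real (n-1) \<le> T"
    using sum_bounded_below[of "{..<n}-{i}" 1 "\<lambda>j. exp (b j)"] bj card unfolding T_def by auto
  have T2: "T \<le> real (n-1) * exp 1"
    using sum_bounded_above[of "{..<n}-{i}" "\<lambda>j. exp (b j)" "exp 1"] bj card unfolding T_def by auto
  have T0: "T \<ge> 0" using T1 by linarith
  have Q1: "Q \<le> real (n-1)"
    using sum_bounded_above[of "{..<n}-{i}" "\<lambda>j. (b j)^2" 1] bj card unfolding Q_def
    by (auto simp: power_le_one)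
  have Q0: "Q \<ge> 0" unfolding Q_def by (simp add: sum_nonneg)
  have D0: "D \<ge> 0" unfolding D_def using c by simp
  have Spos: "S > 0" using SS T0 by (simp add: add_pos_nonneg)
  have pay_eq: "pay n c h i b = x - S/exp x * (L + 1/2*h*x^2*(Q/D - 1))"
    unfolding pay_def S_def T_def Q_def D_def L_def x_def by simp
  have alloc_eq: "alloc n i b = exp x / S" unfolding alloc_def S_def x_def by simp
  have hs_le: "hs n c \<le> 1 / (2 * (exp 1)^2 * real n)"
    unfolding hs_def using n by (intro divide_right_mono) auto
  have en: "exp 1 + T \<le> exp 1 * real n"
  proof -
    have "exp 1 + T \<le> exp 1 + real (n-1) * exp 1" using T2 by simp
    also have "\<dots> = exp 1 * real n" using n by (simp add: of_nat_diff algebra_simps)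
    finally show ?thesis .
  qed
  have e1: "exp (1::real) \<ge> 1" by simp
  have inner: "L + 1/2*h*x^2*(Q/D - 1) \<ge> 0"
  proof -
    have L1: "x/(exp 1 + T) \<le> L" unfolding L_def SS using uir_lemma[OF T0 x] .
    have "Q/D \<ge> 0" using Q0 D0 by simp
    hence "1/2*h*x^2*(Q/D) \<ge> 0" using h by (intro mult_nonneg_nonneg) auto
    hence t1: "1/2*h*x^2*(Q/D - 1) \<ge> -(1/2*h*x^2)" by (simp add: right_diff_distrib)
    have x2: "x^2 \<le> x" using x by (simp add: power2_eq_square mult_left_le)
    have hsm: "h \<le> 1 / (exp 1 * real n)"
    proof -
      have "h \<le> 1 / (2 * (exp 1)^2 * real n)" using h hs_le by linarith
      also have "\<dots> \<le> 1 / (exp 1 * real n)"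
      proof (rule divide_left_mono)
        have "exp 1 * real n \<le> (exp 1 * exp 1) * real n" using n e1 by (intro mult_right_mono) auto
        also have "\<dots> \<le> 2 * (exp 1)^2 * real n" by (simp add: power2_eq_square)
        finally show "exp 1 * real n \<le> 2 * (exp 1)^2 * real n" .
        show "0 < 2 * (exp 1)^2 * real n * (exp 1 * real n)" using n by simp
      qed simp
      finally show ?thesis .
    qed
    also have "\<dots> \<le> 1 / (exp 1 + T)" using en T0 n
      by (intro divide_left_mono) (auto intro!: mult_pos_pos add_pos_nonneg)
    finally have "h \<le> 1 / (exp 1 + T)" .
    hence "1/2*h*x^2 \<le> 1 / (exp 1 + T) * x"
    proof -
      have "1/2*h*x^2 \<le> 1/2*h*x" using x2 h by (intro mult_left_mono) auto
      also have "\<dots> \<le> 1 / (exp 1 + T) * x" using \<open>h \<le> 1 / (exp 1 + T)\<close> h x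
        by (intro mult_right_mono) auto
      finally show ?thesis .
    qed
    hence "1/2*h*x^2 \<le> x/(exp 1 + T)" by simp
    with L1 t1 show ?thesis by linarith
  qed
  show "pay n c h i b \<le> b i"
    unfolding pay_eq x_def[symmetric] using inner Spos by (simp add: mult_nonneg_nonneg)
  have ap: "alloc n i b * pay n c h i b = (x*exp x/(exp x + T) - L) - 1/2*h*x^2*(Q/D) + h/2*x^2"
  proof -
    define W where "W = L + 1/2*h*x^2*(Q/D - 1)"
    have one: "exp x/S * (S/exp x) = 1" using Spos by simp
    have "exp x / S * (x - S/exp x * W) = x*exp x/S - (exp x/S * (S/exp x)) * W"
      by (simp add: right_diff_distrib mult.assoc)
    also have "\<dots> = x*exp x/S - W" using one by simp
    finally have "alloc n i b * pay n c h i b = x*exp x/S - W" unfolding alloc_eq pay_eq W_def .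
    moreover have "W = L + 1/2*h*x^2*(Q/D) - h/2*x^2" unfolding W_def by (simp add: right_diff_distrib)
    ultimately show ?thesis unfolding SS by simp
  qed
  have key: "1/2*h*x^2*(Q/D) \<le> x*exp x/(exp x + T) - L"
  proof (cases "D = 0")
    case True
    show ?thesis using slack_lemma[OF T0 x, of 0] True unfolding L_def SS
      by (simp add: divide_nonneg_nonneg add_pos_nonneg T0)
  next
    case False
    hence Dp: "D > 0" and cp: "c > 0" and n2: "n \<ge> 2" using D0 c n unfolding D_def
      by (auto simp: zero_less_mult_iff)
    define k where "k = real (n-1) / (exp 1 * real n)^2"
    have k0: "0 \<le> k" unfolding k_def by simp
    have kT: "k \<le> T/(exp 1 + T)^2"
    proof -
      have "k \<le> real (n-1) / (exp 1 + T)^2" unfolding k_def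
      proof (rule divide_left_mono)
        have "exp 1 + T > 0" using T0 by (simp add: add_pos_nonneg)
        then show "(exp 1 + T)^2 \<le> (exp 1 * real n)^2" using en by (intro power_mono) auto
        show "0 < (exp 1 * real n)^2 * (exp 1 + T)^2" using \<open>exp 1 + T > 0\<close> n by simp
      qed simp
      also have "\<dots> \<le> T/(exp 1 + T)^2" using T1 by (intro divide_right_mono) auto
      finally show ?thesis .
    qed
    have sl: "k/2*x^2 \<le> x*exp x/(exp x + T) - L"
      using slack_lemma[OF T0 x k0 kT] unfolding L_def SS by simp
    have n1p: "real (n-1) > 0" using n2 by simp
    have QD: "Q/D \<le> 1/c"
    proof -
      have "Q/D \<le> real (n-1)/D" using Q1 Dp by (intro divide_right_mono) auto
      also have "\<dots> = 1/c" unfolding D_def using n1p cp by simp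
      finally show ?thesis .
    qed
    have hk: "h/c \<le> k"
    proof -
      define E :: real where "E = (exp 1)^2"
      define N :: real where "N = real n"
      have Ep: "E > 0" unfolding E_def by simp
      have N2: "N \<ge> 2" unfolding N_def using n2 by simp
      have kE: "k = (N-1)/(E*N^2)" unfolding k_def E_def N_def using n2
        by (simp add: of_nat_diff power_mult_distrib)
      have "h \<le> hs n c" by (rule h(2))
      also have "hs n c \<le> c / (2 * E * N)" unfolding hs_def E_def N_def using cp n
        by (intro divide_right_mono) auto
      finally have "h/c \<le> (c / (2 * E * N))/c" using cp by (intro divide_right_mono) auto
      also have "\<dots> = 1/(2*E*N)" using cp by simp
      also have "\<dots> = (1/2) * (1/(E*N))" by simp
      also have "\<dots> \<le> ((N-1)/N) * (1/(E*N))"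
      proof (rule mult_right_mono)
        show "1/2 \<le> (N-1)/N" using N2 by (simp add: divide_simps)
        show "0 \<le> 1/(E*N)" using Ep N2 by simp
      qed
      also have "\<dots> = k" unfolding kE by (simp add: power2_eq_square)
      finally show ?thesis .
    qed
    have "1/2*h*x^2*(Q/D) \<le> 1/2*h*x^2*(1/c)" using QD h by (intro mult_left_mono) auto
    also have "\<dots> = (h/c)/2*x^2" by simp
    also have "\<dots> \<le> k/2*x^2" using hk by (intro mult_right_mono) auto
    finally show ?thesis using sl by linarith
  qed
  show "alloc n i b * pay n c h i b \<ge> h/2 * (b i)^2"
    unfolding ap x_def[symmetric] using key by linarith
qed

lemma main_n:
  assumes n: "n \<ge> 1" and c: "c \<ge> 0" and h: "0 \<le> h" "h \<le> hs n c"
  shows "UIR n (alloc n) (pay n c h) \<and> BF n (alloc n) (pay n c h) (revenue n c h)"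
proof
  show "UIR n (alloc n) (pay n c h)" unfolding UIR_def using core_i(1)[OF n c h] by blast
  show "BF n (alloc n) (pay n c h) (revenue n c h)" unfolding BF_def
  proof
    fix b :: "nat \<Rightarrow> real" assume b: "b \<in> bids n"
    have "revenue n c h b \<le> 1/2*h*(\<Sum>i<n. (b i)^2)"
    proof -
      have "(\<Sum>(i,j)\<in>{(i,j). i < j \<and> j < n}. (b i)\<^sup>2 * (b j)\<^sup>2) / (c * real (n - 1)) \<ge> 0"
        using c by (intro divide_nonneg_nonneg sum_nonneg) auto
      then show ?thesis unfolding revenue_def using h by (simp add: mult_left_mono)
    qed
    also have "\<dots> = (\<Sum>i<n. h/2*(b i)^2)" by (simp add: sum_distrib_left)
    also have "\<dots> \<le> (\<Sum>i<n. alloc n i b * pay n c h i b)"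
      using core_i(2)[OF n c h b] by (intro sum_mono) auto
    finally show "revenue n c h b \<le> (\<Sum>i<n. alloc n i b * pay n c h i b)" .
  qed
qed

lemma c_nonneg: "(\<lambda>t. (\<rho> t)\<^sup>2) integrable_on {0..1} \<Longrightarrow> c_rho \<rho> \<ge> 0"
  unfolding c_rho_def by (rule integral_nonneg) auto

lemma omega_hs: "(\<lambda>n. hs n c) \<in> \<Omega>(\<lambda>n. c / real n)"
proof -
  define m where "m = (if c > 0 then min 1 c else 1)"
  have m: "m > 0" unfolding m_def by auto
  have "(\<lambda>n. c / real n) \<in> O(\<lambda>n. hs n c)"
  proof (rule bigoI[of _ "2 * (exp 1)^2 * \<bar>c\<bar> / m"])
    show "\<forall>\<^sub>F n in at_top. norm (c / real n) \<le> 2 * (exp 1)^2 * \<bar>c\<bar> / m * norm (hs n c)"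
    proof (rule always_eventually, rule allI)
      fix n :: nat
      have "hs n c = m / (2 * (exp 1)^2 * real n)" unfolding hs_def m_def by simp
      then show "norm (c / real n) \<le> 2 * (exp 1)^2 * \<bar>c\<bar> / m * norm (hs n c)"
        using m by (simp add: abs_mult)
    qed
  qed
  then show ?thesis by (simp add: bigomega_iff_bigo)
qed

theorem theorem1:
  "\<exists>hstar :: nat \<Rightarrow> real \<Rightarrow> real.
     (\<forall>n \<ge> 1. \<forall>\<rho>. pdf01 \<rho> \<and> (\<lambda>t. (\<rho> t)\<^sup>2) integrable_on {0..1} \<longrightarrow>
        hstar n (c_rho \<rho>) > 0 \<and>
        (\<forall>h \<in> {0..hstar n (c_rho \<rho>)}.
           UIR n (alloc n) (pay n (c_rho \<rho>) h) \<and>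
           BF n (alloc n) (pay n (c_rho \<rho>) h) (revenue n (c_rho \<rho>) h)))
   \<and> (\<forall>\<rho>. pdf01 \<rho> \<and> (\<lambda>t. (\<rho> t)\<^sup>2) integrable_on {0..1} \<longrightarrow>
        (\<lambda>n. hstar n (c_rho \<rho>)) \<in> \<Omega>(\<lambda>n. c_rho \<rho> / real n))"
  apply (rule exI[of _ hs], rule conjI)
   apply (intro allI impI)
  subgoal for n \<rho>
  proof -
    assume n: "n \<ge> 1" and r: "pdf01 \<rho> \<and> (\<lambda>t. (\<rho> t)\<^sup>2) integrable_on {0..1}"
    have c: "c_rho \<rho> \<ge> 0" using r c_nonneg by blast
    have m: "(if c_rho \<rho> > 0 then min 1 (c_rho \<rho>) else 1) > 0" by auto
    have "hs n (c_rho \<rho>) > 0" unfolding hs_def using n m by (intro divide_pos_pos) auto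
    moreover have "\<forall>h \<in> {0..hs n (c_rho \<rho>)}.
           UIR n (alloc n) (pay n (c_rho \<rho>) h) \<and>
           BF n (alloc n) (pay n (c_rho \<rho>) h) (revenue n (c_rho \<rho>) h)"
      using main_n[OF n c] by simp
    ultimately show ?thesis by (rule conjI)
  qed
  apply (intro allI impI)
  apply (rule omega_hs)
  done

end
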